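(* Let $r(\mathcal{C},R)$ be a reachability rule and $\mathrm{H}:=\mathrm{H}(\mathbf{G}(r(\mathcal{C},R)))$. If $\mathrm{H}'$ is a fracturable subset of $\mathrm{H}$ (in $\mathsf{DG}(\mathrm H)$), then $r(\mathcal{C},R)\preceq\ \triangleright^{0} pw\ \triangleright^{1} r(\mathcal{C},R)\ominus\mathbf{G}(\mathrm{H}')\ \triangleright^{0}\mathrm{H}'$.
   Context: Fix a countably infinite set $\mathtt{S}$ of sequents (atomic labels), a set $\mathcal{U}$ of vertices, and a non-empty finite set $\mathtt{E}$ of edge types. A g-sequent is $\mathcal{G}=(\mathcal{V},\mathcal{E},\mathcal{L})$ with $\mathcal{V}\subseteq\mathcal{U}$, $\mathcal{E}=\{\mathcal{E}_a\mid a\in\mathtt{E}\}$, $\mathcal{E}_a\subseteq\mathcal{V}\times\mathcal{V}$, $\mathcal{L}:\mathcal{V}\to\mathtt{S}$; $\mathcal U(\mathcal G)=\mathcal V$; written $\Gamma\vdash\Delta$ with $\Gamma$ the set of edge atoms $w\mathcal{E}_a u$ and $\Delta$ the set of prefixed sequents $w:S$; $\mathtt{PS}=\mathcal U\times\mathtt S$; commas denote disjoint union. Let $\overline{\mathtt E}=\{\bar a\mid a\in\mathtt E\}$, $\bar{\bar z}=z$, $\overline{x_1\cdots x_n}=\bar x_n\cdots\bar x_1$, $\varepsilon$ empty string. Paths: $\mathcal{G}\models u\xrightarrow{a}w$ iff $(u,w)\in\mathcal{E}_a$; $u\xrightarrow{\bar a}w$ iff $(w,u)\in\mathcal{E}_a$;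 $u\xrightarrow{\varepsilon}w$ iff $u=w$; $u\xrightarrow{xs}w$ iff some $v$ has $u\xrightarrow{x}v$, $v\xrightarrow{s}w$; $u\xrightarrow{\mathscr L}w$ iff $u\xrightarrow{s}w$ for some $s\in\mathscr L$. An $\mathtt E$-system is a finite set $\mathbf G$ of production rules $x\longrightarrow t$ ($x\in\mathtt E\cup\overline{\mathtt E}$) with $x\longrightarrow t\in\mathbf G$ iff $\bar x\longrightarrow\bar t\in\mathbf G$; $\mathbf G(s)=\{t\mid s\longrightarrow^*_{\mathbf G}t\}$. For $p=x\longrightarrow t$, $\bar p=\bar x\longrightarrow\bar t$; $(p,\bar p)$ is a production pair; $P(\mathbf G)$ is the set of such pairs. A sequent constraint $R\subseteq\mathtt S^n\times2^{\mathtt{PS}}$ is satisfied by $S_1,\dots,S_n,\Delta$ iff $(S_{\pi(1)},\dots,S_{\pi(n)},\Delta)\in R$ for some permutation $\pi$. A reachability rule $r(\mathcal C,R)$ has premises $\Gamma\vdash\Delta,w:S_i,u:S'_i$ ($i\in[n]$) and conclusion $\Gamma\vdash\Delta,w:S,u:S'$, where $\mathcal C=(C_1,\dots,C_n)$, $C_i=(\{w,u\},\{(w,u)\},L_i)$ with $L_i(w,u)=\mathbf G_i(a_i)$ ($a_i\in\mathtt E$, $\mathbf G_i$ an $\mathtt E$-system), the $i$-th premise satisfies $\mathcal G\models w\xrightarrow{\mathbf G_i(a_i)}u$, and $S_1,S'_1,\dots,S_n,S'_n,S,S',\Delta$ satisfy $R$. $\mathbf G(r(\mathcal C,R))=\bigcup_i\mathbf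 G_i$. Fracture: $r(\mathcal C,R)\ominus\mathbf G$ replaces each label $\mathbf G_i(a_i)$ by $(\mathbf G_i\setminus\mathbf G)(a_i)$. Horn rules: for $s=x_1\cdots x_n$, $w\mathcal E_s u$ abbreviates atoms $w\mathcal E_{x_1}v_1,\dots,v_{n-1}\mathcal E_{x_n}u$ ($v\mathcal E_{\bar a}z$ means $z\mathcal E_a v$; $w\mathcal E_\varepsilon u$ means $w=u$). Forward Horn rule $h_f$: premise $\Gamma,w\mathcal{E}_s u,w\mathcal{E}_a u\vdash\Delta$, conclusion $\Gamma,w\mathcal{E}_s u\vdash\Delta$; backward $h_b$: same with $u\mathcal E_a w$ in place of $w\mathcal E_a u$. $\mathbf{G}(h_f)=\{a\longrightarrow s,\bar a\longrightarrow\bar s\}$, $\mathbf{G}(h_b)=\{\bar a\longrightarrow s,a\longrightarrow\bar s\}$, $\mathbf G(\mathrm H)=\bigcup_{h\in\mathrm H}\mathbf G(h)$. For a pair $(p,\bar p)$ with $p=a\longrightarrow s$ (resp. $\bar a\longrightarrow s$), $\mathrm H(p,\bar p)$ is the corresponding forward (resp. backward) Horn rule; $\mathrm H(\mathbf G)=\bigcup_{(p,\bar p)\in P(\mathbf G)}\mathrm H(p,\bar p)$. Dependency graph: for distinct pairs with $p=x\longrightarrow s$, $p'=y\longrightarrow t$, $(p,\bar p)\sqsubset(p',\bar p')$ iff $s$ or $\bar s$ contains $y$; $\sqsubseteq$ its reflexive-transitive closure; $\mathsf{DG}(\mathrm H)=(\mathrm H,\sqsubseteq')$ with $h\sqsubseteq'h'$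 iff the pair of $h$ is $\sqsubseteq$ that of $h'$. $V'\subseteq V$ is fracturable in $(V,\sqsubseteq)$ iff no $v\in V'$, $v'\in V\setminus V'$ have $v\sqsubseteq v'$. The path weakening rule $pw$ has premise $\Gamma\vdash\Delta$ and conclusion $\Gamma,\Sigma\vdash\Delta$ with $\Sigma=w\mathcal E_a u$ for some $a\in\mathtt E$ and $w,u\in\mathcal U(\Gamma\vdash\Delta)$. Simulation: $\mathrm R_1\preceq\mathrm R_2$ iff whatever is derivable from given g-sequents using $\mathrm R_1$ is derivable from them using $\mathrm R_2$. An ordered rule set $\triangleright^{i_1}\mathrm R_1\cdots\triangleright^{i_k}\mathrm R_k$ ($i_j\in\{0,1\}$) is $\mathrm R_1\cup\dots\cup\mathrm R_k$ restricted to derivations that (top to bottom) first apply at least $i_1$ rules from $\mathrm R_1$, then at least $i_2$ rules from $\mathrm R_2$, etc.; singletons written by their element. *)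

theory Defs
  imports Main "HOL-Library.Countable" "HOL-Combinatorics.Permutations"
begin

text \<open>Letters of the alphabet E united with bar-E: Fw a is a, Bw a is the barred a.\<close>
datatype 'e letter = Fw 'e | Bw 'e

fun lbar :: "'e letter \<Rightarrow> 'e letter" where
  "lbar (Fw a) = Bw a"
| "lbar (Bw a) = Fw a"

definition sbar :: "'e letter list \<Rightarrow> 'e letter list" where
  "sbar s = rev (map lbar s)"

type_synonym 'e production = "'e letter \<times> 'e letter list"

definition pbar :: "'e production \<Rightarrow> 'e production" where
  "pbar p = (lbar (fst p), sbar (snd p))"

definition esystem :: "'e production set \<Rightarrow> bool" where
  "esystem G \<longleftrightarrow> finite G \<and> (\<forall>x t. (x, t) \<in> G \<longleftrightarrow> (lbar x, sbar t) \<in> G)"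

definition gstep :: "'e production set \<Rightarrow> ('e letter list \<times> 'e letter list) set" where
  "gstep G = {(u @ [x] @ v, u @ t @ v) | u x t v. (x, t) \<in> G}"

definition glang :: "'e production set \<Rightarrow> 'e letter list \<Rightarrow> 'e letter list set" where
  "glang G s = {t. (s, t) \<in> (gstep G)\<^sup>*}"

text \<open>A g-sequent Gamma |- Delta: Gamma is the set of edge atoms (w, a, u) (meaning w E_a u),
  Delta the set of prefixed sequents (w, S) (meaning w : S).  The vertex set is the set of
  prefixes in Delta, the labelling is Delta read as a function.\<close>
type_synonym ('v, 'e) atom = "'v \<times> 'e \<times> 'v"
type_synonym ('v, 'e, 's) gseq = "('v, 'e) atom set \<times> ('v \<times> 's) set"

definition verts :: "('v, 'e, 's) gseq \<Rightarrow> 'v set" where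
  "verts G = fst ` snd G"

definition wf_gseq :: "('v, 'e, 's) gseq \<Rightarrow> bool" where
  "wf_gseq G \<longleftrightarrow>
     (\<forall>w S S'. (w, S) \<in> snd G \<longrightarrow> (w, S') \<in> snd G \<longrightarrow> S = S') \<and>
     (\<forall>w a u. (w, a, u) \<in> fst G \<longrightarrow> w \<in> verts G \<and> u \<in> verts G)"

fun letter_edge :: "('v, 'e) atom set \<Rightarrow> 'v \<Rightarrow> 'e letter \<Rightarrow> 'v \<Rightarrow> bool" where
  "letter_edge \<Gamma> u (Fw a) w \<longleftrightarrow> (u, a, w) \<in> \<Gamma>"
| "letter_edge \<Gamma> u (Bw a) w \<longleftrightarrow> (w, a, u) \<in> \<Gamma>"

fun path :: "('v, 'e) atom set \<Rightarrow> 'v \<Rightarrow> 'e letter list \<Rightarrow> 'v \<Rightarrow> bool" where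
  "path \<Gamma> u [] w \<longleftrightarrow> u = w"
| "path \<Gamma> u (x # s) w \<longleftrightarrow> (\<exists>v. letter_edge \<Gamma> u x v \<and> path \<Gamma> v s w)"

definition lpath :: "('v, 'e) atom set \<Rightarrow> 'v \<Rightarrow> 'e letter list set \<Rightarrow> 'v \<Rightarrow> bool" where
  "lpath \<Gamma> u L w \<longleftrightarrow> (\<exists>s\<in>L. path \<Gamma> u s w)"

text \<open>The edge atom corresponding to a letter step v --x--> z (v E_{bar a} z means z E_a v).\<close>
fun letter_atom :: "'v \<Rightarrow> 'e letter \<Rightarrow> 'v \<Rightarrow> ('v, 'e) atom" where
  "letter_atom v (Fw a) z = (v, a, z)"
| "letter_atom v (Bw a) z = (z, a, v)"

text \<open>Sigma is a set of atoms w E_s u, for some choice of intermediate vertices vs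
  (vs ! 0 = w, vs ! length s = u; for s empty this means w = u and Sigma is empty).\<close>
definition path_atoms :: "'v \<Rightarrow> 'e letter list \<Rightarrow> 'v \<Rightarrow> ('v, 'e) atom set \<Rightarrow> bool" where
  "path_atoms w s u \<Sigma> \<longleftrightarrow>
     (\<exists>vs. length vs = Suc (length s) \<and> vs ! 0 = w \<and> vs ! length s = u \<and>
           \<Sigma> = {letter_atom (vs ! i) (s ! i) (vs ! Suc i) | i. i < length s})"

text \<open>A rule is the set of its instances (list of premises, conclusion).\<close>
type_synonym ('v, 'e, 's) rule = "(('v, 'e, 's) gseq list \<times> ('v, 'e, 's) gseq) set"

inductive_set derivable :: "('v, 'e, 's) rule set \<Rightarrow> ('v, 'e, 's) gseq set \<Rightarrow> ('v, 'e, 's) gseq set"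
  for RS Hyp where
  hyp: "G \<in> Hyp \<Longrightarrow> G \<in> derivable RS Hyp"
| rule: "r \<in> RS \<Longrightarrow> (ps, c) \<in> r \<Longrightarrow> (\<forall>p\<in>set ps. p \<in> derivable RS Hyp) \<Longrightarrow> c \<in> derivable RS Hyp"

definition derivable1 :: "('v, 'e, 's) rule set \<Rightarrow> ('v, 'e, 's) gseq set \<Rightarrow> ('v, 'e, 's) gseq set" where
  "derivable1 RS Hyp = {c. \<exists>r\<in>RS. \<exists>ps. (ps, c) \<in> r \<and> (\<forall>p\<in>set ps. p \<in> derivable RS Hyp)}"

text \<open>Ordered rule set: list of (i_j, R_j), i_j in {0,1}; derivations first use R_1
  (at least i_1 times), then R_2 (at least i_2 times), etc., top to bottom.\<close>
fun ord_derivable :: "(nat \<times> ('v, 'e, 's) rule set) list \<Rightarrow> ('v, 'e, 's) gseq set \<Rightarrow> ('v, 'e, 's) gseq set" where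
  "ord_derivable [] Hyp = Hyp"
| "ord_derivable ((i, RS) # rest) Hyp =
     ord_derivable rest (if i = 0 then derivable RS Hyp else derivable1 RS Hyp)"

definition simulated_by :: "('v, 'e, 's) rule set \<Rightarrow> (nat \<times> ('v, 'e, 's) rule set) list \<Rightarrow> bool" where
  "simulated_by R1 Ord \<longleftrightarrow> (\<forall>r\<in>R1. \<forall>(ps, c)\<in>r. c \<in> ord_derivable Ord (set ps))"

definition sat_constraint :: "('s list \<times> ('v \<times> 's) set) set \<Rightarrow> 's list \<Rightarrow> ('v \<times> 's) set \<Rightarrow> bool" where
  "sat_constraint R xs \<Delta> \<longleftrightarrow>
     (\<exists>\<pi>. \<pi> permutes {..<length xs} \<and> (map (\<lambda>i. xs ! \<pi> i) [0..<length xs], \<Delta>) \<in> R)"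

text \<open>The reachability rule r(C,R), with C given by the list cs of pairs (a_i, G_i):
  the i-th premise must satisfy w --G_i(a_i)--> u.\<close>
definition reach_rule ::
  "('e \<times> 'e production set) list \<Rightarrow> ('s list \<times> ('v \<times> 's) set) set \<Rightarrow> ('v, 'e, 's) rule" where
  "reach_rule cs R =
    {(ps, c) | ps c \<Gamma> \<Delta> w u S S' Ss Ss'.
       length Ss = length cs \<and> length Ss' = length cs \<and>
       ps = map (\<lambda>i. (\<Gamma>, insert (w, Ss ! i) (insert (u, Ss' ! i) \<Delta>))) [0..<length cs] \<and>
       c = (\<Gamma>, insert (w, S) (insert (u, S') \<Delta>)) \<and>
       wf_gseq c \<and> (w, S) \<notin> \<Delta> \<and> (u, S') \<notin> \<Delta> \<and> (w, S) \<noteq> (u, S') \<and>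
       (\<forall>i<length cs. wf_gseq (ps ! i) \<and> (w, Ss ! i) \<notin> \<Delta> \<and> (u, Ss' ! i) \<notin> \<Delta> \<and>
           (w, Ss ! i) \<noteq> (u, Ss' ! i) \<and>
           lpath \<Gamma> w (glang (snd (cs ! i)) [Fw (fst (cs ! i))]) u) \<and>
       sat_constraint R (concat (map (\<lambda>i. [Ss ! i, Ss' ! i]) [0..<length cs]) @ [S, S']) \<Delta>}"

definition is_reach_param :: "('e \<times> 'e production set) list \<Rightarrow> bool" where
  "is_reach_param cs \<longleftrightarrow> (\<forall>(a, G)\<in>set cs. esystem G)"

definition sys_of_rule :: "('e \<times> 'e production set) list \<Rightarrow> 'e production set" where
  "sys_of_rule cs = (\<Union>(a, G)\<in>set cs. G)"

definition fracture :: "('e \<times> 'e production set) list \<Rightarrow> 'e production set \<Rightarrow> ('e \<times> 'e production set) list" where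
  "fracture cs G = map (\<lambda>(a, Gi). (a, Gi - G)) cs"

text \<open>A production pair (p, bar p) is represented as the (two-element) set {p, bar p}.\<close>
definition prod_pairs :: "'e production set \<Rightarrow> 'e production set set" where
  "prod_pairs G = {{p, pbar p} | p. p \<in> G}"

text \<open>Forward Horn rule for a --> s: premise Gamma, w E_s u, w E_a u |- Delta,
  conclusion Gamma, w E_s u |- Delta (commas: disjoint unions).\<close>
definition horn_fw :: "'e \<Rightarrow> 'e letter list \<Rightarrow> ('v, 'e, 's) rule" where
  "horn_fw a s = {([(\<Gamma> \<union> \<Sigma> \<union> {(w, a, u)}, \<Delta>)], (\<Gamma> \<union> \<Sigma>, \<Delta>)) | \<Gamma> \<Sigma> \<Delta> w u.
      path_atoms w s u \<Sigma> \<and> \<Gamma> \<inter> \<Sigma> = {} \<and> (w, a, u) \<notin> \<Gamma> \<union> \<Sigma> \<and>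
      wf_gseq (\<Gamma> \<union> \<Sigma> \<union> {(w, a, u)}, \<Delta>) \<and> wf_gseq (\<Gamma> \<union> \<Sigma>, \<Delta>)}"

definition horn_bw :: "'e \<Rightarrow> 'e letter list \<Rightarrow> ('v, 'e, 's) rule" where
  "horn_bw a s = {([(\<Gamma> \<union> \<Sigma> \<union> {(u, a, w)}, \<Delta>)], (\<Gamma> \<union> \<Sigma>, \<Delta>)) | \<Gamma> \<Sigma> \<Delta> w u.
      path_atoms w s u \<Sigma> \<and> \<Gamma> \<inter> \<Sigma> = {} \<and> (u, a, w) \<notin> \<Gamma> \<union> \<Sigma> \<and>
      wf_gseq (\<Gamma> \<union> \<Sigma> \<union> {(u, a, w)}, \<Delta>) \<and> wf_gseq (\<Gamma> \<union> \<Sigma>, \<Delta>)}"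

fun horn_of_prod :: "'e production \<Rightarrow> ('v, 'e, 's) rule" where
  "horn_of_prod (Fw a, s) = horn_fw a s"
| "horn_of_prod (Bw a, s) = horn_bw a s"

text \<open>H(p, bar p): the Horn rule of a production pair, read off from a member p of the pair
  (both members give the same rule).\<close>
definition horn_of_pair :: "'e production set \<Rightarrow> ('v, 'e, 's) rule" where
  "horn_of_pair P = horn_of_prod (SOME p. p \<in> P)"

definition dep :: "'e production set \<Rightarrow> 'e production set \<Rightarrow> bool" where
  "dep P P' \<longleftrightarrow> P \<noteq> P' \<and>
     (\<exists>p\<in>P. \<exists>p'\<in>P'. fst p' \<in> set (snd p) \<or> fst p' \<in> set (sbar (snd p)))"

text \<open>The dependency graph order on a set V of Horn rules (identified with their
  production pairs): reflexive-transitive closure of dep within V.\<close>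
definition dg_le :: "'e production set set \<Rightarrow> ('e production set \<times> 'e production set) set" where
  "dg_le V = {(P, P'). P \<in> V \<and> P' \<in> V \<and> dep P P'}\<^sup>*"

definition fracturable :: "'e production set set \<Rightarrow> 'e production set set \<Rightarrow> bool" where
  "fracturable V V' \<longleftrightarrow> V' \<subseteq> V \<and> (\<forall>v\<in>V'. \<forall>v'\<in>V - V'. (v, v') \<notin> dg_le V)"

definition pw_rule :: "('v, 'e, 's) rule" where
  "pw_rule = {([(\<Gamma>, \<Delta>)], (\<Gamma> \<union> {(w, a, u)}, \<Delta>)) | \<Gamma> \<Delta> w a u.
      (w, a, u) \<notin> \<Gamma> \<and> w \<in> verts (\<Gamma>, \<Delta>) \<and> u \<in> verts (\<Gamma>, \<Delta>) \<and>
      wf_gseq (\<Gamma>, \<Delta>) \<and> wf_gseq (\<Gamma> \<union> {(w, a, u)}, \<Delta>)}"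

end

theory Submission
  imports Defs
begin

lemma letter_edge_atom: "letter_edge \<Gamma> u x v \<longleftrightarrow> letter_atom u x v \<in> \<Gamma>"
  by (cases x) auto

lemma path_append: "path \<Gamma> a (s @ t) b \<longleftrightarrow> (\<exists>m. path \<Gamma> a s m \<and> path \<Gamma> m t b)"
  by (induction s arbitrary: a) auto

lemma path_mono: "path \<Gamma> a s b \<Longrightarrow> \<Gamma> \<subseteq> \<Gamma>' \<Longrightarrow> path \<Gamma>' a s b"
  by (induction s arbitrary: a) (auto simp: letter_edge_atom)

lemma lbar_lbar[simp]: "lbar (lbar x) = x" by (cases x) auto

lemma letter_atom_bar: "letter_atom v (lbar x) u = letter_atom u x v" by (cases x) auto

lemma sbar_sbar[simp]: "sbar (sbar s) = s" by (simp add: sbar_def rev_map comp_def)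

lemma pbar_pbar[simp]: "pbar (pbar p) = p" by (simp add: pbar_def)

lemma path_sbar: "path \<Gamma> a s b \<Longrightarrow> path \<Gamma> b (sbar s) a"
proof (induction s arbitrary: a)
  case Nil then show ?case by (simp add: sbar_def)
next
  case (Cons x s)
  then obtain v where v: "letter_edge \<Gamma> a x v" "path \<Gamma> v s b" by auto
  have "path \<Gamma> b (sbar s) v" using Cons v by auto
  moreover have "letter_edge \<Gamma> v (lbar x) a" using v by (simp add: letter_edge_atom letter_atom_bar)
  ultimately show ?case by (auto simp: sbar_def path_append)
qed

lemma path_vs: "path \<Gamma> a s b \<Longrightarrow> \<exists>vs. length vs = Suc (length s) \<and> vs ! 0 = a \<and> vs ! length s = b \<and>
   (\<forall>i<length s. letter_atom (vs ! i) (s ! i) (vs ! Suc i) \<in> \<Gamma>)"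
proof (induction s arbitrary: a)
  case Nil then show ?case by (intro exI[of _ "[a]"]) auto
next
  case (Cons x s)
  then obtain v where v: "letter_edge \<Gamma> a x v" "path \<Gamma> v s b" by auto
  then obtain vs where vs: "length vs = Suc (length s)" "vs ! 0 = v" "vs ! length s = b"
    "\<forall>i<length s. letter_atom (vs ! i) (s ! i) (vs ! Suc i) \<in> \<Gamma>" using Cons by blast
  show ?case
  proof (intro exI[of _ "a # vs"] conjI allI impI)
    fix i assume "i < length (x # s)"
    then show "letter_atom ((a # vs) ! i) ((x # s) ! i) ((a # vs) ! Suc i) \<in> \<Gamma>"
      using vs v by (cases i) (auto simp: letter_edge_atom)
  qed (use vs in auto)
qed

lemma path_end_in: "path \<Gamma> a s b \<Longrightarrow> a \<in> V \<Longrightarrow> (\<forall>x y z. (x, y, z) \<in> \<Gamma> \<longrightarrow> x \<in> V \<and> z \<in> V) \<Longrightarrow> b \<in> V"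
proof (induction s arbitrary: a)
  case Nil then show ?case by simp
next
  case (Cons x s)
  then obtain v where v: "letter_edge \<Gamma> a x v" "path \<Gamma> v s b" by auto
  have "v \<in> V" using v(1) Cons.prems by (cases x) auto
  then show ?case using Cons v by blast
qed

definition wfD :: "('v \<times> 's) set \<Rightarrow> bool" where
  "wfD \<Delta> \<longleftrightarrow> (\<forall>w S S'. (w, S) \<in> \<Delta> \<longrightarrow> (w, S') \<in> \<Delta> \<longrightarrow> S = S')"

definition atomsin :: "('v, 'e) atom set \<Rightarrow> 'v set \<Rightarrow> bool" where
  "atomsin \<Gamma> V \<longleftrightarrow> (\<forall>x y z. (x, y, z) \<in> \<Gamma> \<longrightarrow> x \<in> V \<and> z \<in> V)"

lemma wf_gseq_iff: "wf_gseq (\<Gamma>, \<Delta>) \<longleftrightarrow> wfD \<Delta> \<and> atomsin \<Gamma> (fst ` \<Delta>)"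
  by (simp add: wf_gseq_def wfD_def atomsin_def verts_def)

lemma horn_inst:
  assumes "path \<Gamma>' v1 s v2" "letter_atom v1 y v2 \<notin> \<Gamma>'"
    "wf_gseq (\<Gamma>' \<union> {letter_atom v1 y v2}, \<Delta>)" "wf_gseq (\<Gamma>', \<Delta>)"
  shows "([(\<Gamma>' \<union> {letter_atom v1 y v2}, \<Delta>)], (\<Gamma>', \<Delta>)) \<in> horn_of_prod (y, s)"
proof -
  obtain vs where vs: "length vs = Suc (length s)" "vs ! 0 = v1" "vs ! length s = v2"
    "\<forall>i<length s. letter_atom (vs ! i) (s ! i) (vs ! Suc i) \<in> \<Gamma>'"
    using path_vs[OF assms(1)] by blast
  define \<Sigma> where "\<Sigma> = {letter_atom (vs ! i) (s ! i) (vs ! Suc i) | i. i < length s}"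
  have pa: "path_atoms v1 s v2 \<Sigma>" unfolding path_atoms_def \<Sigma>_def using vs by blast
  have sub: "\<Sigma> \<subseteq> \<Gamma>'" using vs unfolding \<Sigma>_def by blast
  have eq: "(\<Gamma>' - \<Sigma>) \<union> \<Sigma> = \<Gamma>'" using sub by blast
  have disj: "(\<Gamma>' - \<Sigma>) \<inter> \<Sigma> = {}" by blast
  show ?thesis
  proof (cases y)
    case (Fw a)
    have "([((\<Gamma>' - \<Sigma>) \<union> \<Sigma> \<union> {(v1, a, v2)}, \<Delta>)], ((\<Gamma>' - \<Sigma>) \<union> \<Sigma>, \<Delta>)) \<in> horn_fw a s"
      unfolding horn_fw_def mem_Collect_eq
      apply (rule exI[of _ "\<Gamma>' - \<Sigma>"], rule exI[of _ \<Sigma>], rule exI[of _ \<Delta>], rule exI[of _ v1], rule exI[of _ v2])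
      using pa disj assms Fw unfolding eq by auto
    then show ?thesis using Fw eq by simp
  next
    case (Bw a)
    have "([((\<Gamma>' - \<Sigma>) \<union> \<Sigma> \<union> {(v2, a, v1)}, \<Delta>)], ((\<Gamma>' - \<Sigma>) \<union> \<Sigma>, \<Delta>)) \<in> horn_bw a s"
      unfolding horn_bw_def mem_Collect_eq
      apply (rule exI[of _ "\<Gamma>' - \<Sigma>"], rule exI[of _ \<Sigma>], rule exI[of _ \<Delta>], rule exI[of _ v1], rule exI[of _ v2])
      using pa disj assms Bw unfolding eq by auto
    then show ?thesis using Bw eq by simp
  qed
qed

lemma horn_pair_inst:
  assumes "P = {q, pbar q}" "q = (y, s)" "path \<Gamma>' v1 s v2" "letter_atom v1 y v2 \<notin> \<Gamma>'"
    "wf_gseq (\<Gamma>' \<union> {letter_atom v1 y v2}, \<Delta>)" "wf_gseq (\<Gamma>', \<Delta>)"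
  shows "([(\<Gamma>' \<union> {letter_atom v1 y v2}, \<Delta>)], (\<Gamma>', \<Delta>)) \<in> horn_of_pair P"
proof -
  have "(SOME p. p \<in> P) \<in> P" using assms(1) by (metis insertI1 someI)
  then have "(SOME p. p \<in> P) = q \<or> (SOME p. p \<in> P) = pbar q" using assms(1) by auto
  then show ?thesis
  proof
    assume "(SOME p. p \<in> P) = q"
    then show ?thesis unfolding horn_of_pair_def using horn_inst[OF assms(3-6)] assms(2) by simp
  next
    assume h: "(SOME p. p \<in> P) = pbar q"
    have "([(\<Gamma>' \<union> {letter_atom v2 (lbar y) v1}, \<Delta>)], (\<Gamma>', \<Delta>)) \<in> horn_of_prod (lbar y, sbar s)"
      apply (rule horn_inst)
      using path_sbar[OF assms(3)] assms(4-6) by (auto simp: letter_atom_bar)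
    then show ?thesis unfolding horn_of_pair_def h using assms(2) by (simp add: pbar_def letter_atom_bar)
  qed
qed

definition goodG :: "('v, 'e) atom set \<Rightarrow> ('v \<times> 's) set \<Rightarrow> ('v, 'e, 's) rule set \<Rightarrow> ('v, 'e) atom set \<Rightarrow> bool" where
  "goodG \<Gamma>0 \<Delta> HR \<Gamma>' \<longleftrightarrow> \<Gamma>0 \<subseteq> \<Gamma>' \<and> finite (\<Gamma>' - \<Gamma>0) \<and> atomsin \<Gamma>' (fst ` \<Delta>) \<and>
     (\<forall>Hyp. (\<Gamma>', \<Delta>) \<in> derivable HR Hyp \<longrightarrow> (\<Gamma>0, \<Delta>) \<in> derivable HR Hyp)"

lemma horn_step:
  assumes good: "goodG \<Gamma>0 \<Delta> (horn_of_pair ` H') \<Gamma>'" and wfD: "wfD \<Delta>"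
    and P: "P \<in> H'" "P = {q, pbar q}" "q = (x, r)"
    and path: "path \<Gamma>' v1 r v2" and v1: "v1 \<in> fst ` \<Delta>"
  shows "\<exists>\<Gamma>''. goodG \<Gamma>0 \<Delta> (horn_of_pair ` H') \<Gamma>'' \<and> \<Gamma>' \<subseteq> \<Gamma>'' \<and> letter_edge \<Gamma>'' v1 x v2"
proof (cases "letter_atom v1 x v2 \<in> \<Gamma>'")
  case True
  then show ?thesis using good by (auto simp: letter_edge_atom)
next
  case False
  let ?e = "letter_atom v1 x v2"
  have at: "atomsin \<Gamma>' (fst ` \<Delta>)" using good by (simp add: goodG_def)
  have v2: "v2 \<in> fst ` \<Delta>" using path_end_in[OF path v1] at by (auto simp: atomsin_def)
  have at2: "atomsin (\<Gamma>' \<union> {?e}) (fst ` \<Delta>)" using at v1 v2 by (cases x) (auto simp: atomsin_def)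
  have inst: "([(\<Gamma>' \<union> {?e}, \<Delta>)], (\<Gamma>', \<Delta>)) \<in> horn_of_pair P"
    by (rule horn_pair_inst[OF P(2,3) path False]) (use wfD at at2 in \<open>auto simp: wf_gseq_iff\<close>)
  have "goodG \<Gamma>0 \<Delta> (horn_of_pair ` H') (\<Gamma>' \<union> {?e})"
    unfolding goodG_def
  proof (intro conjI allI impI)
    show "\<Gamma>0 \<subseteq> \<Gamma>' \<union> {?e}" using good by (auto simp: goodG_def)
    have "\<Gamma>' \<union> {?e} - \<Gamma>0 \<subseteq> insert ?e (\<Gamma>' - \<Gamma>0)" by blast
    then show "finite (\<Gamma>' \<union> {?e} - \<Gamma>0)" using good by (auto simp: goodG_def intro: finite_subset)
    show "atomsin (\<Gamma>' \<union> {?e}) (fst ` \<Delta>)" by (rule at2)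
    fix Hyp assume "(\<Gamma>' \<union> {?e}, \<Delta>) \<in> derivable (horn_of_pair ` H') Hyp"
    then have "(\<Gamma>', \<Delta>) \<in> derivable (horn_of_pair ` H') Hyp"
      using derivable.rule[OF _ inst] P(1) by auto
    then show "(\<Gamma>0, \<Delta>) \<in> derivable (horn_of_pair ` H') Hyp" using good by (auto simp: goodG_def)
  qed
  then show ?thesis by (intro exI[of _ "\<Gamma>' \<union> {?e}"]) (auto simp: letter_edge_atom)
qed

lemma gstep_iff: "(a, b) \<in> gstep G \<longleftrightarrow> (\<exists>u x t v. a = u @ [x] @ v \<and> b = u @ t @ v \<and> (x, t) \<in> G)"
  by (auto simp: gstep_def)

lemma rt_app_left: "(a, a') \<in> (gstep G)\<^sup>* \<Longrightarrow> (c @ a, c @ a') \<in> (gstep G)\<^sup>*"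
proof (induction rule: rtrancl_induct)
  case (step y z)
  then obtain u x t v where "y = u @ [x] @ v" "z = u @ t @ v" "(x, t) \<in> G" by (auto simp: gstep_iff)
  then have "(c @ y, c @ z) \<in> gstep G" unfolding gstep_iff by (intro exI[of _ "c @ u"]) auto
  then show ?case using step by (meson rtrancl.rtrancl_into_rtrancl)
qed simp

lemma rt_app_right: "(a, a') \<in> (gstep G)\<^sup>* \<Longrightarrow> (a @ c, a' @ c) \<in> (gstep G)\<^sup>*"
proof (induction rule: rtrancl_induct)
  case (step y z)
  then obtain u x t v where "y = u @ [x] @ v" "z = u @ t @ v" "(x, t) \<in> G" by (auto simp: gstep_iff)
  then have "(y @ c, z @ c) \<in> gstep G" unfolding gstep_iff by (intro exI[of _ u] exI[of _ x] exI[of _ t] exI[of _ "v @ c"]) auto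
  then show ?case using step by (meson rtrancl.rtrancl_into_rtrancl)
qed simp

lemma rt_split: "(u @ v, z) \<in> (gstep G)\<^sup>* \<Longrightarrow> \<exists>u' v'. z = u' @ v' \<and> (u, u') \<in> (gstep G)\<^sup>* \<and> (v, v') \<in> (gstep G)\<^sup>*"
proof (induction rule: rtrancl_induct)
  case base then show ?case by blast
next
  case (step y z)
  then obtain u' v' where uv: "y = u' @ v'" "(u, u') \<in> (gstep G)\<^sup>*" "(v, v') \<in> (gstep G)\<^sup>*" by blast
  obtain a x t b where ab: "y = a @ [x] @ b" "z = a @ t @ b" "(x, t) \<in> G" using step(2) by (auto simp: gstep_iff)
  have "u' @ v' = a @ ([x] @ b)" using uv ab by simp
  then obtain us where "(u' = a @ us \<and> us @ v' = [x] @ b) \<or> (u' @ us = a \<and> v' = us @ [x] @ b)"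
    unfolding append_eq_append_conv2 by blast
  then show ?case
  proof
    assume h: "u' = a @ us \<and> us @ v' = [x] @ b"
    show ?thesis
    proof (cases us)
      case Nil
      then have "(v', t @ b) \<in> gstep G" using h ab unfolding gstep_iff by (intro exI[of _ "[]"]) auto
      then show ?thesis using h Nil ab uv by (intro exI[of _ u'] exI[of _ "t @ b"]) auto
    next
      case (Cons y1 us')
      then have "u' = a @ [x] @ us'" "b = us' @ v'" using h by auto
      then have "(u', a @ t @ us') \<in> gstep G" using ab unfolding gstep_iff by blast
      then show ?thesis using uv ab \<open>b = us' @ v'\<close> by (intro exI[of _ "a @ t @ us'"] exI[of _ v']) auto
    qed
  next
    assume h: "u' @ us = a \<and> v' = us @ [x] @ b"
    then have "(v', us @ t @ b) \<in> gstep G" using ab unfolding gstep_iff by blast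
    then show ?thesis using uv ab h by (intro exI[of _ u'] exI[of _ "us @ t @ b"]) auto
  qed
qed

lemma rt_frozen: "(r, z) \<in> (gstep G)\<^sup>* \<Longrightarrow> (\<forall>q\<in>G. fst q \<notin> set r) \<Longrightarrow> z = r"
proof (induction rule: rtrancl_induct)
  case (step y z)
  then have "y = r" by simp
  with step obtain u x t v where "r = u @ [x] @ v" "(x, t) \<in> G" by (auto simp: gstep_iff)
  then show ?case using step.prems by force
qed simp

lemma collapse:
  assumes st: "(s, t) \<in> (gstep G)\<^sup>*"
    and wfD: "wfD \<Delta>"
    and pairs: "\<And>p. p \<in> \<Union>H' \<Longrightarrow> {p, pbar p} \<in> H'"
    and clos: "\<And>x r q. (x, r) \<in> \<Union>H' \<Longrightarrow> q \<in> G \<Longrightarrow> fst q \<in> set r \<Longrightarrow> q \<in> \<Union>H'"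
  shows "\<forall>\<Gamma>' v1 v2. goodG \<Gamma>0 \<Delta> (horn_of_pair ` H') \<Gamma>' \<longrightarrow> v1 \<in> fst ` \<Delta> \<longrightarrow> path \<Gamma>' v1 t v2 \<longrightarrow>
     (\<exists>\<Gamma>'' s'. goodG \<Gamma>0 \<Delta> (horn_of_pair ` H') \<Gamma>'' \<and> \<Gamma>' \<subseteq> \<Gamma>'' \<and>
        (s, s') \<in> (gstep (G - \<Union>H'))\<^sup>* \<and> path \<Gamma>'' v1 s' v2)"
  using st
proof (induction rule: converse_rtrancl_induct)
  case base
  then show ?case by blast
next
  case (step s y)
  show ?case
  proof (intro allI impI)
    fix \<Gamma>' v1 v2
    assume g: "goodG \<Gamma>0 \<Delta> (horn_of_pair ` H') \<Gamma>'" and v1: "v1 \<in> fst ` \<Delta>" and p: "path \<Gamma>' v1 t v2"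
    obtain \<Gamma>'' s'' where IH: "goodG \<Gamma>0 \<Delta> (horn_of_pair ` H') \<Gamma>''" "\<Gamma>' \<subseteq> \<Gamma>''"
      "(y, s'') \<in> (gstep (G - \<Union>H'))\<^sup>*" "path \<Gamma>'' v1 s'' v2"
      using step.IH g v1 p by blast
    obtain a x r b where ab: "s = a @ [x] @ b" "y = a @ r @ b" "(x, r) \<in> G"
      using step.hyps(1) by (auto simp: gstep_iff)
    show "\<exists>\<Gamma>'' s'. goodG \<Gamma>0 \<Delta> (horn_of_pair ` H') \<Gamma>'' \<and> \<Gamma>' \<subseteq> \<Gamma>'' \<and>
        (s, s') \<in> (gstep (G - \<Union>H'))\<^sup>* \<and> path \<Gamma>'' v1 s' v2"
    proof (cases "(x, r) \<in> \<Union>H'")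
      case False
      then have "(s, y) \<in> gstep (G - \<Union>H')" using ab unfolding gstep_iff by blast
      then show ?thesis using IH by (meson converse_rtrancl_into_rtrancl)
    next
      case True
      from IH(3) ab obtain a' z1 where z1: "s'' = a' @ z1" "(a, a') \<in> (gstep (G - \<Union>H'))\<^sup>*"
        "(r @ b, z1) \<in> (gstep (G - \<Union>H'))\<^sup>*" using rt_split[of a "r @ b" s'' "G - \<Union>H'"] by metis
      from z1(3) obtain r' b' where z2: "z1 = r' @ b'" "(r, r') \<in> (gstep (G - \<Union>H'))\<^sup>*"
        "(b, b') \<in> (gstep (G - \<Union>H'))\<^sup>*" using rt_split by blast
      have "r' = r"
        by (rule rt_frozen[OF z2(2)]) (use clos True in blast)
      then have "path \<Gamma>'' v1 (a' @ r @ b') v2" using IH(4) z1 z2 by simp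
      then obtain m1 m2 where m: "path \<Gamma>'' v1 a' m1" "path \<Gamma>'' m1 r m2" "path \<Gamma>'' m2 b' v2"
        by (auto simp: path_append)
      have at: "atomsin \<Gamma>'' (fst ` \<Delta>)" using IH(1) by (simp add: goodG_def)
      have m1: "m1 \<in> fst ` \<Delta>" using path_end_in[OF m(1) v1] at by (auto simp: atomsin_def)
      obtain \<Gamma>3 where g3: "goodG \<Gamma>0 \<Delta> (horn_of_pair ` H') \<Gamma>3" "\<Gamma>'' \<subseteq> \<Gamma>3" "letter_edge \<Gamma>3 m1 x m2"
        using horn_step[OF IH(1) wfD pairs[OF True] refl refl m(2) m1] by blast
      have "path \<Gamma>3 v1 (a' @ [x] @ b') v2"
        using path_mono[OF m(1) g3(2)] path_mono[OF m(3) g3(2)] g3(3) by (auto simp: path_append)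
      moreover have "(s, a' @ [x] @ b') \<in> (gstep (G - \<Union>H'))\<^sup>*"
      proof -
        have "(a @ [x] @ b, a' @ [x] @ b) \<in> (gstep (G - \<Union>H'))\<^sup>*" using rt_app_right[OF z1(2)] by simp
        moreover have "(a' @ [x] @ b, a' @ [x] @ b') \<in> (gstep (G - \<Union>H'))\<^sup>*"
          using rt_app_left[OF z2(3), of "a' @ [x]"] by simp
        ultimately show ?thesis using ab by simp
      qed
      ultimately show ?thesis using g3 IH(2) by blast
    qed
  qed
qed

lemma pairs_of:
  assumes "H' \<subseteq> prod_pairs D" "p \<in> \<Union>H'" shows "{p, pbar p} \<in> H'"
proof -
  obtain P where P: "P \<in> H'" "p \<in> P" using assms by blast
  then obtain q where "P = {q, pbar q}" using assms(1) by (auto simp: prod_pairs_def)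
  then have "P = {p, pbar p}" using P by auto
  then show ?thesis using P by simp
qed

lemma clos_of:
  assumes fr: "fracturable (prod_pairs D) H'" and xr: "(x, r) \<in> \<Union>H'" and q: "q \<in> D" and y: "fst q \<in> set r"
  shows "q \<in> \<Union>H'"
proof (rule ccontr)
  assume nq: "q \<notin> \<Union>H'"
  have sub: "H' \<subseteq> prod_pairs D" using fr by (simp add: fracturable_def)
  obtain P where P: "P \<in> H'" "(x, r) \<in> P" using xr by blast
  let ?Q = "{q, pbar q}"
  have Q: "?Q \<in> prod_pairs D" using q unfolding prod_pairs_def by blast
  have QH: "?Q \<notin> H'" using nq by blast
  have "P \<noteq> ?Q" using P QH by blast
  then have "dep P ?Q" unfolding dep_def using P y
    by (intro conjI bexI[of _ "(x, r)"] bexI[of _ q]) auto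
  then have "(P, ?Q) \<in> dg_le (prod_pairs D)" unfolding dg_le_def using P sub Q by blast
  then show False using fr P Q QH unfolding fracturable_def by blast
qed

lemma pw_many:
  assumes "finite E"
  shows "(\<Gamma>, \<Delta>) \<in> derivable {pw_rule} Hyp \<Longrightarrow> wf_gseq (\<Gamma>, \<Delta>) \<Longrightarrow> atomsin E (fst ` \<Delta>) \<Longrightarrow>
    (\<Gamma> \<union> E, \<Delta>) \<in> derivable {pw_rule} Hyp"
  using assms
proof (induction E rule: finite_induct)
  case empty then show ?case by simp
next
  case (insert e F)
  have F: "(\<Gamma> \<union> F, \<Delta>) \<in> derivable {pw_rule} Hyp" using insert by (auto simp: atomsin_def)
  show ?case
  proof (cases "e \<in> \<Gamma> \<union> F")
    case True
    then have "\<Gamma> \<union> insert e F = \<Gamma> \<union> F" by blast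
    then show ?thesis using F by simp
  next
    case False
    obtain w a u where e: "e = (w, a, u)" by (cases e) auto
    have wf1: "wf_gseq (\<Gamma> \<union> F, \<Delta>)" using insert.prems by (auto simp: wf_gseq_iff atomsin_def)
    have wf2: "wf_gseq (\<Gamma> \<union> F \<union> {(w, a, u)}, \<Delta>)" using insert.prems e by (auto simp: wf_gseq_iff atomsin_def)
    have "([(\<Gamma> \<union> F, \<Delta>)], (\<Gamma> \<union> F \<union> {(w, a, u)}, \<Delta>)) \<in> pw_rule"
      unfolding pw_rule_def mem_Collect_eq
      apply (rule exI[of _ "\<Gamma> \<union> F"], rule exI[of _ \<Delta>], rule exI[of _ w], rule exI[of _ a], rule exI[of _ u])
      using False e wf1 wf2 insert.prems by (auto simp: verts_def atomsin_def)
    then have "(\<Gamma> \<union> F \<union> {(w, a, u)}, \<Delta>) \<in> derivable {pw_rule} Hyp"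
      using derivable.rule[of pw_rule "{pw_rule}" "[(\<Gamma> \<union> F, \<Delta>)]"] F by simp
    moreover have "\<Gamma> \<union> F \<union> {(w, a, u)} = \<Gamma> \<union> insert e F" using e by blast
    ultimately show ?thesis by simp
  qed
qed

lemma length_fracture[simp]: "length (fracture cs G) = length cs" by (simp add: fracture_def)
lemma fracture_nth[simp]: "i < length cs \<Longrightarrow> fracture cs G ! i = (fst (cs ! i), snd (cs ! i) - G)"
  by (simp add: fracture_def split: prod.splits)

theorem mainTheorem9:
  fixes cs :: "('e::finite \<times> 'e production set) list"
    and R :: "('s::countable list \<times> ('v \<times> 's) set) set"
    and H' :: "'e production set set"
  assumes "infinite (UNIV :: 's set)"
    and "is_reach_param cs"
    and "fracturable (prod_pairs (sys_of_rule cs)) H'"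
  shows "simulated_by {reach_rule cs R :: ('v, 'e, 's) rule}
           [(0, {pw_rule}),
            (1, {reach_rule (fracture cs (\<Union>H')) R}),
            (0, horn_of_pair ` H')]"
  unfolding simulated_by_def
proof (intro ballI, clarify)
  fix ps and \<Gamma> :: "('v, 'e) atom set" and \<Delta>c :: "('v \<times> 's) set"
  assume rr: "(ps, \<Gamma>, \<Delta>c) \<in> (reach_rule cs R :: ('v, 'e, 's) rule)"
  obtain \<Delta> w u S S' Ss Ss' where
    ps: "ps = map (\<lambda>i. (\<Gamma>, insert (w, Ss ! i) (insert (u, Ss' ! i) \<Delta>))) [0..<length cs]" and
    dc: "\<Delta>c = insert (w, S) (insert (u, S') \<Delta>)" and
    len: "length Ss = length cs" "length Ss' = length cs" and
    wfc: "wf_gseq (\<Gamma>, \<Delta>c)" and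
    c1: "(w, S) \<notin> \<Delta>" "(u, S') \<notin> \<Delta>" "(w, S) \<noteq> (u, S')" and
    prem: "\<forall>i<length cs. wf_gseq (ps ! i) \<and> (w, Ss ! i) \<notin> \<Delta> \<and> (u, Ss' ! i) \<notin> \<Delta> \<and>
           (w, Ss ! i) \<noteq> (u, Ss' ! i) \<and>
           lpath \<Gamma> w (glang (snd (cs ! i)) [Fw (fst (cs ! i))]) u" and
    sat: "sat_constraint R (concat (map (\<lambda>i. [Ss ! i, Ss' ! i]) [0..<length cs]) @ [S, S']) \<Delta>"
    using rr unfolding reach_rule_def mem_Collect_eq
    apply (elim exE conjE Pair_inject)
    apply hypsubst
    apply (elim Pair_inject)
    apply hypsubst
    apply (rule that)
    apply assumption
    apply assumption
    apply simp_all
    done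
  define HP where "HP = \<Union>H'"
  define HR :: "('v, 'e, 's) rule set" where "HR = horn_of_pair ` H'"
  define n where "n = length cs"
  have fr: "fracturable (prod_pairs (sys_of_rule cs)) H'" by fact
  have sub: "H' \<subseteq> prod_pairs (sys_of_rule cs)" using fr by (simp add: fracturable_def)
  have wfD: "wfD \<Delta>c" and at0: "atomsin \<Gamma> (fst ` \<Delta>c)" using wfc by (simp_all add: wf_gseq_iff)
  have good0: "goodG \<Gamma> \<Delta>c HR \<Gamma>" using at0 by (simp add: goodG_def)
  have wV: "w \<in> fst ` \<Delta>c" unfolding dc by simp
  have inD: "q \<in> sys_of_rule cs" if "k < n" "q \<in> snd (cs ! k)" for k q
  proof -
    have "cs ! k \<in> set cs" using that n_def by simp
    then show ?thesis unfolding sys_of_rule_def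
      by (rule UN_I) (use that(2) in \<open>simp add: case_prod_beta\<close>)
  qed
  have claim: "k \<le> n \<Longrightarrow> \<exists>\<Gamma>p. goodG \<Gamma> \<Delta>c HR \<Gamma>p \<and>
      (\<forall>i<k. lpath \<Gamma>p w (glang (snd (cs ! i) - HP) [Fw (fst (cs ! i))]) u)" for k
  proof (induction k)
    case 0 then show ?case using good0 by blast
  next
    case (Suc k)
    then obtain \<Gamma>p where gp: "goodG \<Gamma> \<Delta>c HR \<Gamma>p"
      "\<forall>i<k. lpath \<Gamma>p w (glang (snd (cs ! i) - HP) [Fw (fst (cs ! i))]) u" by auto
    have k: "k < n" using Suc by simp
    obtain t where t: "([Fw (fst (cs ! k))], t) \<in> (gstep (snd (cs ! k)))\<^sup>*" "path \<Gamma> w t u"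
    proof -
      have "lpath \<Gamma> w (glang (snd (cs ! k)) [Fw (fst (cs ! k))]) u" using prem k unfolding n_def by blast
      then show ?thesis using that unfolding lpath_def glang_def by blast
    qed
    have pt: "path \<Gamma>p w t u" using path_mono[OF t(2)] gp(1) by (auto simp: goodG_def)
    have col: "\<forall>\<Gamma>' v1 v2. goodG \<Gamma> \<Delta>c (horn_of_pair ` H') \<Gamma>' \<longrightarrow> v1 \<in> fst ` \<Delta>c \<longrightarrow> path \<Gamma>' v1 t v2 \<longrightarrow>
     (\<exists>\<Gamma>'' s'. goodG \<Gamma> \<Delta>c (horn_of_pair ` H') \<Gamma>'' \<and> \<Gamma>' \<subseteq> \<Gamma>'' \<and>
        ([Fw (fst (cs ! k))], s') \<in> (gstep (snd (cs ! k) - \<Union>H'))\<^sup>* \<and> path \<Gamma>'' v1 s' v2)"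
    proof (rule collapse[OF t(1) wfD])
      show "\<And>p. p \<in> \<Union>H' \<Longrightarrow> {p, pbar p} \<in> H'" using pairs_of[OF sub] by blast
      show "\<And>x r q. (x, r) \<in> \<Union>H' \<Longrightarrow> q \<in> snd (cs ! k) \<Longrightarrow> fst q \<in> set r \<Longrightarrow> q \<in> \<Union>H'"
        using clos_of[OF fr] inD[OF k] by blast
    qed
    obtain \<Gamma>'' s' where g2: "goodG \<Gamma> \<Delta>c HR \<Gamma>''" "\<Gamma>p \<subseteq> \<Gamma>''"
        "([Fw (fst (cs ! k))], s') \<in> (gstep (snd (cs ! k) - HP))\<^sup>*" "path \<Gamma>'' w s' u"
      using col[rule_format, OF gp(1)[unfolded HR_def] wV pt] unfolding HR_def HP_def by blast
    show ?case
    proof (intro exI[of _ \<Gamma>''] conjI allI impI)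
      show "goodG \<Gamma> \<Delta>c HR \<Gamma>''" by (rule g2(1))
      fix i assume "i < Suc k"
      then consider "i < k" | "i = k" by linarith
      then show "lpath \<Gamma>'' w (glang (snd (cs ! i) - HP) [Fw (fst (cs ! i))]) u"
      proof cases
        case 1
        then obtain s where "s \<in> glang (snd (cs ! i) - HP) [Fw (fst (cs ! i))]" "path \<Gamma>p w s u"
          using gp(2) unfolding lpath_def by blast
        then show ?thesis using path_mono[OF _ g2(2)] unfolding lpath_def by blast
      next
        case 2
        then show ?thesis using g2 unfolding lpath_def glang_def by blast
      qed
    qed
  qed
  obtain \<Gamma>p where gp: "goodG \<Gamma> \<Delta>c HR \<Gamma>p"
      "\<forall>i<n. lpath \<Gamma>p w (glang (snd (cs ! i) - HP) [Fw (fst (cs ! i))]) u"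
    using claim[of n] by auto
  have atp: "atomsin \<Gamma>p (fst ` \<Delta>c)" using gp by (simp add: goodG_def)
  define \<Delta>i where "\<Delta>i = (\<lambda>i. insert (w, Ss ! i) (insert (u, Ss' ! i) \<Delta>))"
  define ps' where "ps' = map (\<lambda>i. (\<Gamma>p, \<Delta>i i)) [0..<n]"
  have fsteq: "fst ` \<Delta>i i = fst ` \<Delta>c" for i unfolding \<Delta>i_def dc by auto
  have psi: "i < n \<Longrightarrow> ps ! i = (\<Gamma>, \<Delta>i i)" for i using ps n_def \<Delta>i_def by simp
  have wfi: "i < n \<Longrightarrow> wf_gseq (\<Gamma>, \<Delta>i i)" for i proof -
    assume "i < n"
    then have "wf_gseq (ps ! i)" using prem n_def by blast
    then show ?thesis using psi[OF \<open>i < n\<close>] by simp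
  qed
  have prem2: "\<forall>i<length cs. (w, Ss ! i) \<notin> \<Delta> \<and> (u, Ss' ! i) \<notin> \<Delta> \<and> (w, Ss ! i) \<noteq> (u, Ss' ! i)"
    using prem by blast
  have inst: "(ps', (\<Gamma>p, \<Delta>c)) \<in> reach_rule (fracture cs HP) R"
    unfolding reach_rule_def mem_Collect_eq
    apply (rule exI[of _ ps'], rule exI[of _ "(\<Gamma>p, \<Delta>c)"], rule exI[of _ \<Gamma>p], rule exI[of _ \<Delta>],
        rule exI[of _ w], rule exI[of _ u], rule exI[of _ S], rule exI[of _ S'], rule exI[of _ Ss], rule exI[of _ Ss'])
    apply (intro conjI)
    using len c1 sat wfD atp gp(2) wfi fsteq prem2
    apply (simp_all add: ps'_def \<Delta>i_def dc n_def wf_gseq_iff)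
    done
  have pw: "p \<in> derivable {pw_rule} (set ps)" if pin: "p \<in> set ps'" for p
  proof -
    obtain i where i: "i < n" "p = (\<Gamma>p, \<Delta>i i)" using pin by (auto simp: ps'_def)
    have "(\<Gamma>, \<Delta>i i) \<in> set ps" 
    proof -
      have "ps ! i \<in> set ps" using i(1) ps n_def by simp
      then show ?thesis using psi[OF i(1)] by simp
    qed
    then have d: "(\<Gamma>, \<Delta>i i) \<in> derivable {pw_rule} (set ps)" by (rule derivable.hyp)
    have fin: "finite (\<Gamma>p - \<Gamma>)" using gp by (simp add: goodG_def)
    have "(\<Gamma> \<union> (\<Gamma>p - \<Gamma>), \<Delta>i i) \<in> derivable {pw_rule} (set ps)"
      by (rule pw_many[OF fin d wfi[OF i(1)]]) (use atp fsteq in \<open>auto simp: atomsin_def\<close>)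
    moreover have "\<Gamma> \<union> (\<Gamma>p - \<Gamma>) = \<Gamma>p" using gp by (auto simp: goodG_def)
    ultimately show ?thesis using i by simp
  qed
  have "(\<Gamma>p, \<Delta>c) \<in> derivable1 {reach_rule (fracture cs HP) R} (derivable {pw_rule} (set ps))"
  proof -
    have "\<forall>p\<in>set ps'. p \<in> derivable {reach_rule (fracture cs HP) R} (derivable {pw_rule} (set ps))"
      using pw by (blast intro: derivable.hyp)
    then show ?thesis unfolding derivable1_def using inst by blast
  qed
  then have "(\<Gamma>p, \<Delta>c) \<in> derivable HR (derivable1 {reach_rule (fracture cs HP) R} (derivable {pw_rule} (set ps)))"
    by (rule derivable.hyp)
  then have "(\<Gamma>, \<Delta>c) \<in> derivable HR (derivable1 {reach_rule (fracture cs HP) R} (derivable {pw_rule} (set ps)))"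
    using gp by (simp add: goodG_def)
  then show "(\<Gamma>, \<Delta>c) \<in> ord_derivable [(0, {pw_rule}), (1, {reach_rule (fracture cs (\<Union>H')) R}), (0, horn_of_pair ` H')] (set ps)"
    by (simp add: HR_def HP_def)
qed

end
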